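(* Fix $k$, $\theta^{(k-1)}\in\mathbb{R}^d$, step sizes $h_k,h_{k-1}>0$, $\beta_k\ge0$, and $p^{(k-1)}\in\mathbb{R}^d$; set $\theta^{(k)}=\theta^{(k-1)}+h_{k-1}p^{(k-1)}$, $v^{(k)}=D(\theta^{(k)})$, $v^{(k-1)}=D(\theta^{(k-1)})$ and $z^{(k-1)}\in\mathbb{R}^d$ with entries $z^{(k-1)}_i=(\psi^{(k)}_i,v^{(k)}-v^{(k-1)})_X$. Define the natural Heavy-Ball momentum $$p^{(k)}=\beta_k\,G_X^{(k)\dagger}G_X^{(k,k-1)}p^{(k-1)}-h_k\,G^{(k)\dagger}\nabla L(\theta^{(k)})$$ and the functional-difference momentum $$\widehat{p^{(k)}}=\frac{\beta_k}{h_{k-1}}\,G_X^{(k)\dagger}z^{(k-1)}-h_k\,G^{(k)\dagger}\nabla L(\theta^{(k)}).$$ Then $$\big\|\psi^{(k)T}\widehat{p^{(k)}}-\psi^{(k)T}p^{(k)}\big\|_X\le\frac{h_{k-1}}{2}\,\beta_k\,\kappa_{\max}(\theta^{(k-1)})\,\|p^{(k-1)}\|_2^2+o\big(h_{k-1}\|p^{(k-1)}\|_2^2\big),$$ where the remainder is understood as $h_{k-1}\|p^{(k-1)}\|_2\to0$ with $\theta^{(k-1)}$ fixed.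
   Context: $D:\mathbb{R}^d\to H$ is a twice continuously Fréchet differentiable map into a space $H$ of functions equipped with an inner product $(\cdot,\cdot)_X$ and norm $\|\cdot\|_X$. Write $\psi(\theta)=(\psi_1(\theta),\dots,\psi_d(\theta))$ with $\psi_i(\theta)=\frac{\partial D}{\partial\theta_i}(\theta)$, and for $c\in\mathbb{R}^d$, $\psi(\theta)^Tc=\sum_i c_i\psi_i(\theta)$. Let $\psi^{(j)}=\psi(\theta^{(j)})$. $G_X^{(k)}$ is the $d\times d$ Gram matrix with entries $(\psi^{(k)}_i,\psi^{(k)}_j)_X$, $G_X^{(k,k-1)}$ the cross-Gram matrix with entries $(\psi^{(k)}_i,\psi^{(k-1)}_j)_X$, and $\dagger$ denotes the Moore–Penrose pseudo-inverse. $G^{(k)}$ is any symmetric positive semi-definite $d\times d$ matrix and $\nabla L(\theta^{(k)})\in\mathbb{R}^d$ the gradient of the parameter loss $L=\mathcal{L}\circ D$; these terms are the same in both momenta. $H_D(\theta):\mathbb{R}^d\times\mathbb{R}^d\to H$ denotes the second derivative of $D$ at $\theta$, and $\kappa_{\max}(\theta)=\max_{q\in\mathbb{R}^d,\|q\|_2=1}\|H_D(\theta)(q,q)\|_X$. *)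

theory Defs
  imports "HOL-Analysis.Analysis"
begin

text \<open>Parameters live in real^'d (Euclidean norm), the function space H is an abstract
real inner product space 'h. DD :: real^'d => (real^'d =>L 'h) is the first Frechet derivative
of D, DD2 the second one.\<close>

definition psi :: "(real^'d \<Rightarrow> ((real^'d) \<Rightarrow>\<^sub>L 'h::real_normed_vector)) \<Rightarrow> real^'d \<Rightarrow> 'd \<Rightarrow> 'h" where
  "psi DD \<theta> i = blinfun_apply (DD \<theta>) (axis i 1)"

definition psiT :: "(real^'d \<Rightarrow> ((real^'d) \<Rightarrow>\<^sub>L 'h::real_normed_vector)) \<Rightarrow> real^'d \<Rightarrow> real^'d \<Rightarrow> 'h" where
  "psiT DD \<theta> c = (\<Sum>i\<in>UNIV. (c $ i) *\<^sub>R psi DD \<theta> i)"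

definition gramX :: "(real^'d \<Rightarrow> ((real^'d) \<Rightarrow>\<^sub>L 'h::real_inner)) \<Rightarrow> real^'d \<Rightarrow> real^'d^'d" where
  "gramX DD \<theta> = (\<chi> i j. inner (psi DD \<theta> i) (psi DD \<theta> j))"

definition cross_gramX :: "(real^'d \<Rightarrow> ((real^'d) \<Rightarrow>\<^sub>L 'h::real_inner)) \<Rightarrow> real^'d \<Rightarrow> real^'d \<Rightarrow> real^'d^'d" where
  "cross_gramX DD \<theta> \<theta>' = (\<chi> i j. inner (psi DD \<theta> i) (psi DD \<theta>' j))"

definition pinv :: "real^'n^'n \<Rightarrow> real^'n^'n" where
  "pinv A = (THE X. A ** X ** A = A \<and> X ** A ** X = X \<and>
                    transpose (A ** X) = A ** X \<and> transpose (X ** A) = X ** A)"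

definition kappa_max :: "(real^'d \<Rightarrow> ((real^'d) \<Rightarrow>\<^sub>L ((real^'d) \<Rightarrow>\<^sub>L 'h::real_normed_vector))) \<Rightarrow> real^'d \<Rightarrow> real" where
  "kappa_max DD2 \<theta> = (SUP q\<in>sphere 0 1. norm (blinfun_apply (blinfun_apply (DD2 \<theta>) q) q))"

text \<open>Natural Heavy-Ball momentum p^(k) at theta^(k) = theta1, previous iterate theta0.\<close>
definition hb_momentum ::
  "(real^'d \<Rightarrow> ((real^'d) \<Rightarrow>\<^sub>L 'h::real_inner)) \<Rightarrow> real^'d^'d \<Rightarrow> real^'d \<Rightarrow>
   real \<Rightarrow> real \<Rightarrow> real^'d \<Rightarrow> real^'d \<Rightarrow> real^'d \<Rightarrow> real^'d" where
  "hb_momentum DD Gk gradLk \<beta> hk \<theta>0 \<theta>1 p =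
     \<beta> *\<^sub>R (pinv (gramX DD \<theta>1) *v (cross_gramX DD \<theta>1 \<theta>0 *v p)) - hk *\<^sub>R (pinv Gk *v gradLk)"

definition zvec :: "(real^'d \<Rightarrow> 'h::real_inner) \<Rightarrow> (real^'d \<Rightarrow> ((real^'d) \<Rightarrow>\<^sub>L 'h)) \<Rightarrow>
   real^'d \<Rightarrow> real^'d \<Rightarrow> real^'d" where
  "zvec D DD \<theta>0 \<theta>1 = (\<chi> i. inner (psi DD \<theta>1 i) (D \<theta>1 - D \<theta>0))"

definition fd_momentum ::
  "(real^'d \<Rightarrow> 'h::real_inner) \<Rightarrow> (real^'d \<Rightarrow> ((real^'d) \<Rightarrow>\<^sub>L 'h)) \<Rightarrow> real^'d^'d \<Rightarrow> real^'d \<Rightarrow>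
   real \<Rightarrow> real \<Rightarrow> real \<Rightarrow> real^'d \<Rightarrow> real^'d \<Rightarrow> real^'d" where
  "fd_momentum D DD Gk gradLk \<beta> hk hprev \<theta>0 \<theta>1 =
     (\<beta> / hprev) *\<^sub>R (pinv (gramX DD \<theta>1) *v zvec D DD \<theta>0 \<theta>1) - hk *\<^sub>R (pinv Gk *v gradLk)"

end

theory Submission
  imports Defs
begin


definition penrose :: "real^'n^'n \<Rightarrow> real^'n^'n \<Rightarrow> bool" where
  "penrose A X \<longleftrightarrow> A ** X ** A = A \<and> X ** A ** X = X \<and>
                    transpose (A ** X) = A ** X \<and> transpose (X ** A) = X ** A"

lemma penrose_unique:
  assumes "penrose A X" "penrose A Y" shows "X = Y"
proof -
  have a1: "A ** X ** A = A" "X ** A ** X = X" "transpose (A ** X) = A ** X" "transpose (X ** A) = X ** A"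
    using assms(1) by (auto simp: penrose_def)
  have b1: "A ** Y ** A = A" "Y ** A ** Y = Y" "transpose (A ** Y) = A ** Y" "transpose (Y ** A) = Y ** A"
    using assms(2) by (auto simp: penrose_def)
  have "X = X ** (A ** X)" using a1 by (simp add: matrix_mul_assoc)
  also have "\<dots> = X ** (transpose X ** transpose A)" using a1 by (metis matrix_transpose_mul)
  also have "\<dots> = X ** (transpose X ** transpose (A ** Y ** A))" using b1 by simp
  also have "\<dots> = X ** (transpose (A ** X) ** transpose (A ** Y))"
    by (simp add: matrix_transpose_mul matrix_mul_assoc)
  also have "\<dots> = X ** (A ** X) ** (A ** Y)" using a1 b1 by (simp add: matrix_mul_assoc)
  also have "\<dots> = X ** A ** Y" using a1 by (simp add: matrix_mul_assoc)
  finally have X: "X = X ** A ** Y" .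
  have "Y = (Y ** A) ** Y" using b1 by (simp add: matrix_mul_assoc)
  also have "\<dots> = (transpose A ** transpose Y) ** Y" using b1 by (metis matrix_transpose_mul)
  also have "\<dots> = (transpose (A ** X ** A) ** transpose Y) ** Y" using a1 by simp
  also have "\<dots> = (transpose (X ** A) ** transpose (Y ** A)) ** Y"
    by (simp add: matrix_transpose_mul matrix_mul_assoc)
  also have "\<dots> = X ** A ** (Y ** A ** Y)" by (simp only: a1(4) b1(4) matrix_mul_assoc)
  also have "\<dots> = X ** A ** Y" by (simp only: b1(2))
  finally show ?thesis using X by simp
qed

lemma sym_iff_selfadj:
  fixes M :: "real^'n^'n"
  shows "transpose M = M \<longleftrightarrow> (\<forall>x y. (M *v x) \<bullet> y = x \<bullet> (M *v y))"
proof
  assume "transpose M = M"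
  then show "\<forall>x y. (M *v x) \<bullet> y = x \<bullet> (M *v y)"
    by (metis dot_lmul_matrix transpose_matrix_vector)
next
  assume h: "\<forall>x y. (M *v x) \<bullet> y = x \<bullet> (M *v y)"
  have "transpose M *v x = M *v x" for x
  proof -
    have "(transpose M *v x) \<bullet> y = (M *v x) \<bullet> y" for y
      using h dot_lmul_matrix transpose_matrix_vector by metis
    then show ?thesis by (metis vector_eq_rdot)
  qed
  then show "transpose M = M" by (simp add: matrix_eq)
qed

lemma penrose_exists:
  fixes A :: "real^'n^'n"
  assumes symA: "transpose A = A"
  shows "\<exists>X. penrose A X"
proof -
  define f where "f = (\<lambda>x. A *v x)"
  have fsa: "f x \<bullet> y = x \<bullet> f y" for x y using symA sym_iff_selfadj f_def by metis
  define R where "R = range f"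
  have subR: "subspace R" unfolding R_def f_def
    by (simp add: subspace_UNIV real_vector.linear_subspace_image)
  obtain T where T: "0 \<notin> T" "T \<subseteq> R" "pairwise orthogonal T" "independent T" "span T = R"
    using orthogonal_basis_subspace[OF subR] by metis
  define proj where "proj = (\<lambda>y. \<Sum>b\<in>T. (b \<bullet> y / (b \<bullet> b)) *\<^sub>R b)"
  have lproj: "linear proj" unfolding proj_def
    by (intro linear_compose_sum) (auto simp: linear_iff inner_add_right scaleR_add_left add_divide_distrib)
  have P1: "proj y \<in> R" for y
  proof -
    have "proj y \<in> span T" unfolding proj_def by (intro span_sum span_mul span_base)
    then show ?thesis using T(5) by simp
  qed
  have P2: "w \<in> R \<Longrightarrow> orthogonal w (y - proj y)" for w y
    unfolding proj_def using T(3,5) Gram_Schmidt_step[of T w y] by simp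
  have P3: "y \<in> R \<Longrightarrow> proj y = y" for y
  proof -
    assume y: "y \<in> R"
    have "y - proj y \<in> R" using subspace_diff[OF subR y P1[of y]] .
    then have "orthogonal (y - proj y) (y - proj y)" using P2 by blast
    then have "y - proj y = 0" by (simp only: orthogonal_self)
    then show ?thesis by simp
  qed
  have psa: "proj x \<bullet> y = x \<bullet> proj y" for x y
  proof -
    have "proj x \<bullet> y = proj x \<bullet> proj y + proj x \<bullet> (y - proj y)" by (simp add: inner_diff_right)
    also have "\<dots> = proj x \<bullet> proj y" using P2 P1 by (simp add: orthogonal_def)
    also have "\<dots> = x \<bullet> proj y" using P2[of "proj y" x] P1
      by (simp add: orthogonal_def inner_diff_right inner_diff_left inner_commute)
    finally show ?thesis .
  qed
  have fproj: "f (proj v) = f v" for v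
  proof -
    have "f (v - proj v) \<bullet> u = 0" for u
      using fsa[of "v - proj v" u] P2[of "f u" v] by (simp add: R_def orthogonal_def inner_commute)
    then have "f (v - proj v) = 0" by (metis inner_eq_zero_iff)
    then show ?thesis unfolding f_def by (simp add: matrix_vector_mult_diff_distrib)
  qed
  have lf: "linear f" unfolding f_def by simp
  have inj: "inj_on f (span R)"
  proof -
    have "x = 0" if xR: "x \<in> R" "f x = 0" for x
    proof -
      obtain w where "x = f w" using xR(1) R_def by auto
      then have "x \<bullet> x = w \<bullet> f x" using fsa by simp
      then show ?thesis using xR(2) by simp
    qed
    moreover have "span R = R" using subR by (simp add: span_eq_iff)
    ultimately show ?thesis
    proof (intro inj_onI)
      fix x y assume h: "\<And>x. x \<in> R \<Longrightarrow> f x = 0 \<Longrightarrow> x = 0" "span R = R"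
        "x \<in> span R" "y \<in> span R" "f x = f y"
      have "x \<in> R" "y \<in> R" using h(3,4) unfolding h(2) .
      then have "x - y \<in> R" using subspace_diff[OF subR] by blast
      moreover have "f (x - y) = 0" using h(5) unfolding f_def by (simp add: matrix_vector_mult_diff_distrib)
      ultimately show "x = y" using h(1)[of "x - y"] by simp
    qed
  qed
  obtain g where g: "range g \<subseteq> span R" "linear g" "\<forall>x\<in>span R. g (f x) = x"
    using linear_inj_on_left_inverse[OF lf inj] by blast
  have spanR: "span R = R" using subR by (simp add: span_eq_iff)
  define m where "m = g \<circ> proj"
  have lm: "linear m" unfolding m_def using g(2) lproj linear_compose by blast
  have mf: "m (f v) = proj v" for v
  proof -
    have "m (f v) = g (f v)" unfolding m_def using P3[of "f v"] R_def by simp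
    also have "\<dots> = g (f (proj v))" using fproj by simp
    also have "\<dots> = proj v" using g(3) P1 spanR by simp
    finally show ?thesis .
  qed
  have fm: "f (m y) = proj y" for y
  proof -
    obtain v where v: "proj y = f v" using P1 R_def by auto
    have "m y = g (f (proj v))" unfolding m_def using v fproj by simp
    also have "\<dots> = proj v" using g(3) P1 spanR by simp
    finally show ?thesis using v fproj by simp
  qed
  have mR: "m y \<in> R" for y using g(1) spanR unfolding m_def by auto
  define X where "X = matrix m"
  have Xv: "X *v y = m y" for y unfolding X_def using lm matrix_works linear_matrix_vector_mul_eq by metis
  have AXv: "(A ** X) *v y = proj y" for y using fm Xv f_def by (simp add: matrix_vector_mul_assoc[symmetric])
  have XAv: "(X ** A) *v y = proj y" for y using mf Xv f_def by (simp add: matrix_vector_mul_assoc[symmetric])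
  have projf: "proj (A *v x) = A *v x" for x using P3 unfolding R_def f_def by auto
  have "A ** X ** A = A"
    by (simp add: matrix_eq matrix_vector_mul_assoc[symmetric] AXv[unfolded matrix_vector_mul_assoc[symmetric]] projf)
  moreover have "X ** A ** X = X"
    using mf[unfolded f_def] P3[OF mR] by (simp add: matrix_eq matrix_vector_mul_assoc[symmetric] Xv)
  moreover have "transpose (A ** X) = A ** X" using sym_iff_selfadj AXv psa by metis
  moreover have "transpose (X ** A) = X ** A" using sym_iff_selfadj XAv psa by metis
  ultimately show ?thesis unfolding penrose_def by blast
qed



definition PsiT :: "((real^'d) \<Rightarrow>\<^sub>L 'h::real_inner) \<Rightarrow> 'h \<Rightarrow> real^'d" where
  "PsiT L y = (\<chi> i. inner (blinfun_apply L (axis i 1)) y)"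

lemma psiT_eq: "psiT DD \<theta> c = blinfun_apply (DD \<theta>) c"
proof -
  have "psiT DD \<theta> c = blinfun_apply (DD \<theta>) (\<Sum>i\<in>UNIV. (c $ i) *\<^sub>R axis i 1)"
    unfolding psiT_def psi_def by (simp add: blinfun.sum_right blinfun.scaleR_right)
  also have "(\<Sum>i\<in>UNIV. (c $ i) *\<^sub>R axis i 1) = c"
    using basis_expansion[of c] by (simp add: scalar_mult_eq_scaleR)
  finally show ?thesis .
qed

lemma inner_PsiT: "c \<bullet> PsiT L y = blinfun_apply L c \<bullet> y"
proof -
  have "c \<bullet> PsiT L y = (\<Sum>i\<in>UNIV. c $ i * (blinfun_apply L (axis i 1) \<bullet> y))"
    unfolding PsiT_def inner_vec_def by simp
  also have "\<dots> = (\<Sum>i\<in>UNIV. (c $ i) *\<^sub>R blinfun_apply L (axis i 1)) \<bullet> y"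
    by (simp add: inner_sum_left)
  also have "(\<Sum>i\<in>UNIV. (c $ i) *\<^sub>R blinfun_apply L (axis i 1)) = blinfun_apply L c"
    using psiT_eq[of "\<lambda>_. L"] unfolding psiT_def psi_def by simp
  finally show ?thesis .
qed

lemma PsiT_diff: "PsiT L (a - b) = PsiT L a - PsiT L b"
  unfolding PsiT_def by (simp add: vec_eq_iff inner_diff_right)

lemma gram_mult: "gramX DD \<theta> *v c = PsiT (DD \<theta>) (blinfun_apply (DD \<theta>) c)"
proof -
  have "(gramX DD \<theta> *v c) $ i = psi DD \<theta> i \<bullet> psiT DD \<theta> c" for i
    unfolding gramX_def matrix_vector_mult_def psiT_def
    by (simp add: inner_sum_right mult.commute)
  then show ?thesis unfolding PsiT_def psiT_eq psi_def by (simp add: vec_eq_iff)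
qed

lemma cross_mult: "cross_gramX DD \<theta> \<theta>' *v c = PsiT (DD \<theta>) (blinfun_apply (DD \<theta>') c)"
proof -
  have "(cross_gramX DD \<theta> \<theta>' *v c) $ i = psi DD \<theta> i \<bullet> psiT DD \<theta>' c" for i
    unfolding cross_gramX_def matrix_vector_mult_def psiT_def
    by (simp add: inner_sum_right mult.commute)
  then show ?thesis unfolding PsiT_def psiT_eq psi_def by (simp add: vec_eq_iff)
qed

lemma zvec_eq: "zvec D DD \<theta>0 \<theta>1 = PsiT (DD \<theta>1) (D \<theta>1 - D \<theta>0)"
  unfolding zvec_def PsiT_def psi_def by simp

lemma gram_sym: "transpose (gramX DD \<theta>) = gramX DD \<theta>"
  unfolding gramX_def transpose_def by (simp add: vec_eq_iff inner_commute)

lemma pinv_props: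
  assumes "transpose A = A"
  shows "A ** pinv A ** A = A" "transpose (A ** pinv A) = A ** pinv A"
proof -
  obtain X where X: "penrose A X" using penrose_exists[OF assms] by blast
  have "penrose A (THE X. penrose A X)"
    by (rule theI[of "penrose A" X]) (use X penrose_unique in blast)+
  moreover have "pinv A = (THE X. penrose A X)" unfolding pinv_def penrose_def by simp
  ultimately have "penrose A (pinv A)" by simp
  then show "A ** pinv A ** A = A" "transpose (A ** pinv A) = A ** pinv A"
    by (auto simp: penrose_def)
qed

lemma proj_bound:
  fixes L :: "(real^'d) \<Rightarrow>\<^sub>L 'h::real_inner"
  assumes AL: "\<And>c. A *v c = PsiT L (blinfun_apply L c)"
    and symA: "transpose A = A"
    and axa: "A ** X ** A = A" and ax: "transpose (A ** X) = A ** X"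
  shows "norm (blinfun_apply L (X *v PsiT L r)) \<le> norm r"
proof -
  define w where "w = PsiT L r"
  have aax: "A ** (A ** X) = A"
  proof -
    have "transpose (A ** X ** A) = A ** (A ** X)"
      by (simp only: matrix_transpose_mul[of "A ** X" A] symA ax)
    then show ?thesis using axa symA by simp
  qed
  have axsa: "((A ** X) *v x) \<bullet> y = x \<bullet> ((A ** X) *v y)" for x y
    using ax sym_iff_selfadj by metis
  have Ld: "blinfun_apply L (c - (A ** X) *v c) = 0" for c
  proof -
    define d where "d = c - (A ** X) *v c"
    have "A *v d = A *v c - (A ** (A ** X)) *v c"
      unfolding d_def by (simp add: matrix_vector_mult_diff_distrib matrix_vector_mul_assoc)
    then have Ad: "A *v d = 0" using aax by simp
    have "blinfun_apply L d \<bullet> blinfun_apply L d = d \<bullet> (A *v d)"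
      using AL inner_PsiT by metis
    then show ?thesis using Ad d_def by simp
  qed
  have e0: "w - (A ** X) *v w = 0"
  proof -
    have "(w - (A ** X) *v w) \<bullet> c = 0" for c
    proof -
      have "(w - (A ** X) *v w) \<bullet> c = w \<bullet> (c - (A ** X) *v c)"
        using axsa by (simp add: inner_diff_left inner_diff_right)
      also have "\<dots> = blinfun_apply L (c - (A ** X) *v c) \<bullet> r"
        unfolding w_def by (metis inner_PsiT inner_commute)
      finally show ?thesis using Ld by simp
    qed
    then show ?thesis by (metis inner_eq_zero_iff)
  qed
  define u where "u = blinfun_apply L (X *v w)"
  have "PsiT L u = A *v (X *v w)" unfolding u_def using AL by simp
  also have "\<dots> = w" using e0 by (simp add: matrix_vector_mul_assoc)
  finally have Pu: "PsiT L u = PsiT L r" unfolding w_def .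
  have orth: "u \<bullet> (r - u) = 0"
  proof -
    have "u \<bullet> (r - u) = (X *v w) \<bullet> PsiT L (r - u)" unfolding u_def by (simp add: inner_PsiT)
    also have "\<dots> = 0" using Pu by (simp add: PsiT_diff)
    finally show ?thesis .
  qed
  have "(norm r)\<^sup>2 = (norm u)\<^sup>2 + (norm (r - u))\<^sup>2"
    using norm_add_Pythagorean[of u "r - u"] orth by (simp add: orthogonal_def)
  then have "(norm u)\<^sup>2 \<le> (norm r)\<^sup>2" by simp
  then show ?thesis unfolding u_def w_def by (simp add: power2_le_iff_abs_le)
qed



lemma taylor2:
  fixes D :: "real^'d \<Rightarrow> 'h::real_inner"
    and DD :: "real^'d \<Rightarrow> ((real^'d) \<Rightarrow>\<^sub>L 'h)"
    and DD2 :: "real^'d \<Rightarrow> ((real^'d) \<Rightarrow>\<^sub>L ((real^'d) \<Rightarrow>\<^sub>L 'h))"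
  assumes D_deriv: "\<And>\<theta>. (D has_derivative blinfun_apply (DD \<theta>)) (at \<theta>)"
    and DD_deriv: "\<And>\<theta>. (DD has_derivative blinfun_apply (DD2 \<theta>)) (at \<theta>)"
    and e: "e > 0"
  shows "\<exists>\<delta>>0. \<forall>s. norm s < \<delta> \<longrightarrow>
    norm (D (\<theta>0 + s) - D \<theta>0 - blinfun_apply (DD \<theta>0) s
          - (1/2) *\<^sub>R blinfun_apply (blinfun_apply (DD2 \<theta>0) s) s) \<le> e * (norm s)\<^sup>2"
proof -
  obtain d where d: "d > 0" and dd: "\<And>y. norm (y - \<theta>0) < d \<Longrightarrow>
      norm (DD y - DD \<theta>0 - blinfun_apply (DD2 \<theta>0) (y - \<theta>0)) \<le> e * norm (y - \<theta>0)"
    using DD_deriv[of \<theta>0, unfolded has_derivative_at_alt] e by blast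
  show ?thesis
  proof (intro exI[of _ d] conjI allI impI d)
    fix s :: "real^'d" assume ns: "norm s < d"
    define F where "F = blinfun_apply (blinfun_apply (DD2 \<theta>0) s) s"
    define g where "g t = D (\<theta>0 + t *\<^sub>R s) - t *\<^sub>R blinfun_apply (DD \<theta>0) s - (t\<^sup>2/2) *\<^sub>R F" for t :: real
    define g' where "g' t = (\<lambda>u::real. u *\<^sub>R (blinfun_apply (DD (\<theta>0 + t *\<^sub>R s)) s
        - blinfun_apply (DD \<theta>0) s - t *\<^sub>R F))" for t
    have hder: "(g has_derivative g' t) (at t)" for t
    proof -
      have h0: "((\<lambda>t. \<theta>0 + t *\<^sub>R s) has_derivative (\<lambda>u. u *\<^sub>R s)) (at t)"
        by (auto intro!: derivative_eq_intros)
      have h1: "((\<lambda>t. D (\<theta>0 + t *\<^sub>R s)) has_derivative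
          (\<lambda>u. blinfun_apply (DD (\<theta>0 + t *\<^sub>R s)) (u *\<^sub>R s))) (at t)"
        using has_derivative_compose[OF h0 D_deriv] by simp
      have h2: "((\<lambda>t. t *\<^sub>R blinfun_apply (DD \<theta>0) s) has_derivative (\<lambda>u. u *\<^sub>R blinfun_apply (DD \<theta>0) s)) (at t)"
        by (auto intro!: derivative_eq_intros)
      have h3: "((\<lambda>t. (t\<^sup>2/2) *\<^sub>R F) has_derivative (\<lambda>u. (u * t) *\<^sub>R F)) (at t)"
        by (auto intro!: derivative_eq_intros simp: field_simps)
      have "(g has_derivative (\<lambda>u. blinfun_apply (DD (\<theta>0 + t *\<^sub>R s)) (u *\<^sub>R s)
          - u *\<^sub>R blinfun_apply (DD \<theta>0) s - (u * t) *\<^sub>R F)) (at t)"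
        unfolding g_def[abs_def] by (intro has_derivative_diff h1 h2 h3)
      moreover have "(\<lambda>u. blinfun_apply (DD (\<theta>0 + t *\<^sub>R s)) (u *\<^sub>R s)
          - u *\<^sub>R blinfun_apply (DD \<theta>0) s - (u * t) *\<^sub>R F) = g' t"
        unfolding g'_def by (auto simp: blinfun.scaleR_right scaleR_diff_right)
      ultimately show ?thesis by simp
    qed
    have cont: "continuous_on {0..1} g"
      using hder has_derivative_continuous continuous_at_imp_continuous_on by blast
    obtain x where x: "x \<in> {0<..<1}" and mv: "norm (g 1 - g 0) \<le> norm (g' x (1 - 0))"
      using mvt_general[of 0 1 g g'] cont hder by auto
    have "g 1 - g 0 = D (\<theta>0 + s) - D \<theta>0 - blinfun_apply (DD \<theta>0) s - (1/2) *\<^sub>R F"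
      unfolding g_def by (simp add: algebra_simps)
    moreover have "norm (g' x (1 - 0)) \<le> e * (norm s)\<^sup>2"
    proof -
      have nx: "norm (x *\<^sub>R s) \<le> norm s" using x by (auto intro: mult_left_le_one_le)
      have "g' x (1 - 0) = blinfun_apply (DD (\<theta>0 + x *\<^sub>R s) - DD \<theta>0 - blinfun_apply (DD2 \<theta>0) ((\<theta>0 + x *\<^sub>R s) - \<theta>0)) s"
        unfolding g'_def F_def by (simp add: blinfun.diff_left blinfun.scaleR_right blinfun.scaleR_left)
      then have "norm (g' x (1 - 0)) \<le> norm (DD (\<theta>0 + x *\<^sub>R s) - DD \<theta>0 - blinfun_apply (DD2 \<theta>0) ((\<theta>0 + x *\<^sub>R s) - \<theta>0)) * norm s"
        by (simp add: norm_blinfun)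
      also have "\<dots> \<le> (e * norm (x *\<^sub>R s)) * norm s"
        using dd[of "\<theta>0 + x *\<^sub>R s"] nx ns by (intro mult_right_mono) auto
      also have "\<dots> \<le> (e * norm s) * norm s"
        using nx e by (intro mult_right_mono mult_left_mono) auto
      finally show ?thesis by (simp add: power2_eq_square)
    qed
    ultimately show "norm (D (\<theta>0 + s) - D \<theta>0 - blinfun_apply (DD \<theta>0) s
          - (1/2) *\<^sub>R blinfun_apply (blinfun_apply (DD2 \<theta>0) s) s) \<le> e * (norm s)\<^sup>2"
      using mv F_def by simp
  qed
qed

lemma kappa_bound:
  fixes DD2 :: "real^'d \<Rightarrow> ((real^'d) \<Rightarrow>\<^sub>L ((real^'d) \<Rightarrow>\<^sub>L 'h::real_normed_vector))"
  shows "norm (blinfun_apply (blinfun_apply (DD2 \<theta>) s) s) \<le> kappa_max DD2 \<theta> * (norm s)\<^sup>2"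
proof (cases "s = 0")
  case True then show ?thesis by simp
next
  case False
  define q where "q = (1 / norm s) *\<^sub>R s"
  have q: "q \<in> sphere 0 1" using False unfolding q_def by simp
  have nb: "norm (blinfun_apply (blinfun_apply (DD2 \<theta>) v) v) \<le> norm (DD2 \<theta>) * norm v * norm v" for v
  proof -
    have "norm (blinfun_apply (blinfun_apply (DD2 \<theta>) v) v) \<le> norm (blinfun_apply (DD2 \<theta>) v) * norm v"
      by (rule norm_blinfun)
    also have "\<dots> \<le> norm (DD2 \<theta>) * norm v * norm v"
      by (intro mult_right_mono norm_blinfun) auto
    finally show ?thesis .
  qed
  have bdd: "bdd_above ((\<lambda>q. norm (blinfun_apply (blinfun_apply (DD2 \<theta>) q) q)) ` sphere 0 1)"
    by (rule bdd_aboveI[of _ "norm (DD2 \<theta>)"]) (auto, metis nb mult.right_neutral)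
  have kq: "norm (blinfun_apply (blinfun_apply (DD2 \<theta>) q) q) \<le> kappa_max DD2 \<theta>"
    unfolding kappa_max_def by (rule cSUP_upper[OF q bdd])
  have s: "s = norm s *\<^sub>R q" using False unfolding q_def by simp
  have "blinfun_apply (blinfun_apply (DD2 \<theta>) s) s = (norm s)\<^sup>2 *\<^sub>R blinfun_apply (blinfun_apply (DD2 \<theta>) q) q"
    by (subst (1 2) s) (simp add: blinfun.scaleR_right blinfun.scaleR_left power2_eq_square)
  then show ?thesis using kq by (simp add: mult.commute[of "(norm s)\<^sup>2"] mult_right_mono)
qed



lemma PsiT_scale: "PsiT L (c *\<^sub>R y) = c *\<^sub>R PsiT L y"
  unfolding PsiT_def by (simp add: vec_eq_iff)

theorem mainTheorem4:
  fixes D :: "real^'d \<Rightarrow> 'h::real_inner"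
    and DD :: "real^'d \<Rightarrow> ((real^'d) \<Rightarrow>\<^sub>L 'h)"
    and DD2 :: "real^'d \<Rightarrow> ((real^'d) \<Rightarrow>\<^sub>L ((real^'d) \<Rightarrow>\<^sub>L 'h))"
    and G :: "real^'d \<Rightarrow> real^'d^'d"
    and gradL :: "real^'d \<Rightarrow> real^'d"
    and \<theta>0 :: "real^'d" and hk \<beta>k :: real
  assumes D_deriv: "\<And>\<theta>. (D has_derivative blinfun_apply (DD \<theta>)) (at \<theta>)"
    and DD_deriv: "\<And>\<theta>. (DD has_derivative blinfun_apply (DD2 \<theta>)) (at \<theta>)"
    and DD2_cont: "continuous_on UNIV DD2"
    and G_sym: "\<And>\<theta>. transpose (G \<theta>) = G \<theta>"
    and G_psd: "\<And>\<theta> x. 0 \<le> x \<bullet> (G \<theta> *v x)"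
    and hk_pos: "hk > 0"
    and \<beta>k_nonneg: "\<beta>k \<ge> 0"
  shows "\<forall>\<epsilon>>0. \<exists>\<delta>>0. \<forall>h p. 0 < h \<and> h * norm p < \<delta> \<longrightarrow>
          (let \<theta>1 = \<theta>0 + h *\<^sub>R p;
               pk = hb_momentum DD (G \<theta>1) (gradL \<theta>1) \<beta>k hk \<theta>0 \<theta>1 p;
               pk_hat = fd_momentum D DD (G \<theta>1) (gradL \<theta>1) \<beta>k hk h \<theta>0 \<theta>1
           in norm (psiT DD \<theta>1 pk_hat - psiT DD \<theta>1 pk)
              \<le> h / 2 * \<beta>k * kappa_max DD2 \<theta>0 * (norm p)\<^sup>2 + \<epsilon> * (h * (norm p)\<^sup>2))"
proof (intro allI impI)
  fix \<epsilon> :: real assume \<epsilon>: "\<epsilon> > 0"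
  define e where "e = \<epsilon> / (\<beta>k + 1)"
  have e: "e > 0" unfolding e_def using \<epsilon> \<beta>k_nonneg by simp
  have \<beta>e: "\<beta>k * e \<le> \<epsilon>"
    unfolding e_def using \<epsilon> \<beta>k_nonneg by (simp add: field_simps)
  obtain \<delta> where \<delta>: "\<delta> > 0" and tay: "\<And>s. norm s < \<delta> \<Longrightarrow>
    norm (D (\<theta>0 + s) - D \<theta>0 - blinfun_apply (DD \<theta>0) s
          - (1/2) *\<^sub>R blinfun_apply (blinfun_apply (DD2 \<theta>0) s) s) \<le> e * (norm s)\<^sup>2"
    using taylor2[OF D_deriv DD_deriv e, of \<theta>0] by blast
  show "\<exists>\<delta>>0. \<forall>h p. 0 < h \<and> h * norm p < \<delta> \<longrightarrow>
          (let \<theta>1 = \<theta>0 + h *\<^sub>R p;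
               pk = hb_momentum DD (G \<theta>1) (gradL \<theta>1) \<beta>k hk \<theta>0 \<theta>1 p;
               pk_hat = fd_momentum D DD (G \<theta>1) (gradL \<theta>1) \<beta>k hk h \<theta>0 \<theta>1
           in norm (psiT DD \<theta>1 pk_hat - psiT DD \<theta>1 pk)
              \<le> h / 2 * \<beta>k * kappa_max DD2 \<theta>0 * (norm p)\<^sup>2 + \<epsilon> * (h * (norm p)\<^sup>2))"
  proof (intro exI[of _ \<delta>] conjI allI impI \<delta>)
    fix h :: real and p :: "real^'d"
    assume hp: "0 < h \<and> h * norm p < \<delta>"
    then have h: "h > 0" by simp
    define s where "s = h *\<^sub>R p"
    define \<theta>1 where "\<theta>1 = \<theta>0 + s"
    have ns: "norm s = h * norm p" unfolding s_def using h by simp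
    define L where "L = DD \<theta>1"
    define A where "A = gramX DD \<theta>1"
    define X where "X = pinv A"
    define r where "r = D \<theta>1 - D \<theta>0 - blinfun_apply (DD \<theta>0) s"
    have symA: "transpose A = A" unfolding A_def by (rule gram_sym)
    have AL: "A *v c = PsiT L (blinfun_apply L c)" for c unfolding A_def L_def by (rule gram_mult)
    have pp: "A ** X ** A = A" "transpose (A ** X) = A ** X"
      unfolding X_def using pinv_props[OF symA] by auto
    have pb: "norm (blinfun_apply L (X *v PsiT L r)) \<le> norm r"
      by (rule proj_bound[OF AL symA pp])
    define pk where "pk = hb_momentum DD (G \<theta>1) (gradL \<theta>1) \<beta>k hk \<theta>0 \<theta>1 p"
    define pkh where "pkh = fd_momentum D DD (G \<theta>1) (gradL \<theta>1) \<beta>k hk h \<theta>0 \<theta>1"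
    have "pkh - pk = (\<beta>k / h) *\<^sub>R (X *v PsiT L (D \<theta>1 - D \<theta>0))
        - \<beta>k *\<^sub>R (X *v PsiT L (blinfun_apply (DD \<theta>0) p))"
      unfolding pkh_def pk_def fd_momentum_def hb_momentum_def zvec_eq cross_mult X_def A_def L_def
      by simp
    also have "\<beta>k *\<^sub>R (X *v PsiT L (blinfun_apply (DD \<theta>0) p))
        = (\<beta>k / h) *\<^sub>R (X *v PsiT L (blinfun_apply (DD \<theta>0) s))"
      using h unfolding s_def
      by (simp add: blinfun.scaleR_right PsiT_scale matrix_vector_mult_scaleR)
    also have "(\<beta>k / h) *\<^sub>R (X *v PsiT L (D \<theta>1 - D \<theta>0)) - (\<beta>k / h) *\<^sub>R (X *v PsiT L (blinfun_apply (DD \<theta>0) s))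
        = (\<beta>k / h) *\<^sub>R (X *v PsiT L r)"
      unfolding r_def by (simp add: PsiT_diff matrix_vector_mult_diff_distrib scaleR_diff_right)
    finally have diff: "pkh - pk = (\<beta>k / h) *\<^sub>R (X *v PsiT L r)" .
    have "psiT DD \<theta>1 pkh - psiT DD \<theta>1 pk = blinfun_apply L (pkh - pk)"
      unfolding psiT_eq L_def by (simp add: blinfun.diff_right)
    also have "\<dots> = (\<beta>k / h) *\<^sub>R blinfun_apply L (X *v PsiT L r)"
      unfolding diff by (simp add: blinfun.scaleR_right)
    finally have eq: "norm (psiT DD \<theta>1 pkh - psiT DD \<theta>1 pk) = (\<beta>k / h) * norm (blinfun_apply L (X *v PsiT L r))"
      using h \<beta>k_nonneg by simp
    define F where "F = blinfun_apply (blinfun_apply (DD2 \<theta>0) s) s"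
    have nr: "norm r \<le> e * (norm s)\<^sup>2 + 1/2 * kappa_max DD2 \<theta>0 * (norm s)\<^sup>2"
    proof -
      have "norm r \<le> norm (r - (1/2) *\<^sub>R F) + norm ((1/2) *\<^sub>R F)"
        using norm_triangle_ineq[of "r - (1/2) *\<^sub>R F" "(1/2) *\<^sub>R F"] by simp
      moreover have "norm (r - (1/2) *\<^sub>R F) \<le> e * (norm s)\<^sup>2"
        using tay[of s] hp ns unfolding r_def F_def \<theta>1_def by simp
      moreover have "norm ((1/2) *\<^sub>R F) \<le> 1/2 * kappa_max DD2 \<theta>0 * (norm s)\<^sup>2"
        using kappa_bound[of DD2 \<theta>0 s] unfolding F_def by simp
      ultimately show ?thesis by linarith
    qed
    have "norm (psiT DD \<theta>1 pkh - psiT DD \<theta>1 pk) \<le> (\<beta>k / h) * (e * (norm s)\<^sup>2 + 1/2 * kappa_max DD2 \<theta>0 * (norm s)\<^sup>2)"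
      unfolding eq using pb nr h \<beta>k_nonneg
      by (intro mult_left_mono) auto
    also have "\<dots> = h / 2 * \<beta>k * kappa_max DD2 \<theta>0 * (norm p)\<^sup>2 + (\<beta>k * e) * (h * (norm p)\<^sup>2)"
      unfolding ns using h by (simp add: field_simps power2_eq_square)
    also have "\<dots> \<le> h / 2 * \<beta>k * kappa_max DD2 \<theta>0 * (norm p)\<^sup>2 + \<epsilon> * (h * (norm p)\<^sup>2)"
      using \<beta>e h by (intro add_left_mono mult_right_mono) auto
    finally show "let \<theta>1 = \<theta>0 + h *\<^sub>R p;
               pk = hb_momentum DD (G \<theta>1) (gradL \<theta>1) \<beta>k hk \<theta>0 \<theta>1 p;
               pk_hat = fd_momentum D DD (G \<theta>1) (gradL \<theta>1) \<beta>k hk h \<theta>0 \<theta>1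
           in norm (psiT DD \<theta>1 pk_hat - psiT DD \<theta>1 pk)
              \<le> h / 2 * \<beta>k * kappa_max DD2 \<theta>0 * (norm p)\<^sup>2 + \<epsilon> * (h * (norm p)\<^sup>2)"
      unfolding pkh_def pk_def \<theta>1_def s_def Let_def .
  qed
qed

end
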